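(* Assume (OP). Then for every $A\subseteq P$, $\operatorname{dcl}_{\mathcal L(P)}(A)=\operatorname{dcl}(A)$.
   Context: Let $\mathcal M=\langle M,<,+,0,\dots\rangle$ be an o-minimal expansion of an ordered group with a distinguished positive element $1$, in a language $\mathcal L$; $\operatorname{dcl}$ denotes definable closure in $\mathcal M$, and "$\mathcal L_A$-definable" means definable in $\mathcal M$ with parameters from $A$. Fix $P\subseteq M$ and let $\widetilde{\mathcal M}=\langle\mathcal M,P\rangle$, in the language $\mathcal L(P)$ obtained by adding a unary predicate for $P$; $\operatorname{dcl}_{\mathcal L(P)}$ is definable closure in $\widetilde{\mathcal M}$, and "$A$-definable" means definable in $\widetilde{\mathcal M}$ with parameters from $A$. A set $A$ is $\operatorname{dcl}$-independent over $P$ if no $a\in A$ lies in $\operatorname{dcl}((A\setminus\{a\})\cup P)$. $M^n$ has the product order topology. (OP): for every $A\subseteq M$ with $A\setminus P$ $\operatorname{dcl}$-independent over $P$ and every $A$-definable $V\subseteq M^n$, the topological closure $\overline V$ is $\mathcal L_A$-definable. *)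

theory Defs
  imports Complex_Main
begin

text \<open>A structure on the universe of type 'a is represented semantically by the
family of its parameter-free definable sets: D n is the collection of
0-definable subsets of M^n, where M^n is the set of lists of length n.\<close>

definition tuples :: "nat \<Rightarrow> 'a list set" where
  "tuples n = {xs. length xs = n}"

definition def_system :: "(nat \<Rightarrow> 'a list set set) \<Rightarrow> bool" where
  "def_system D \<longleftrightarrow>
     (\<forall>n S. S \<in> D n \<longrightarrow> S \<subseteq> tuples n) \<and>
     (\<forall>n. tuples n \<in> D n) \<and>
     (\<forall>n i j. i < n \<longrightarrow> j < n \<longrightarrow> {xs \<in> tuples n. xs ! i = xs ! j} \<in> D n) \<and>
     (\<forall>n S. S \<in> D n \<longrightarrow> tuples n - S \<in> D n) \<and>
     (\<forall>n S T. S \<in> D n \<longrightarrow> T \<in> D n \<longrightarrow> S \<inter> T \<in> D n) \<and>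
     (\<forall>n S. S \<in> D n \<longrightarrow> {xs @ [y] | xs y. xs \<in> S} \<in> D (Suc n)) \<and>
     (\<forall>n S. S \<in> D (Suc n) \<longrightarrow> butlast ` S \<in> D n) \<and>
     (\<forall>n S p. S \<in> D n \<longrightarrow> bij_betw p {..<n} {..<n} \<longrightarrow>
        {xs \<in> tuples n. map (\<lambda>i. xs ! p i) [0..<n] \<in> S} \<in> D n)"

text \<open>The 0-definable sets of the expansion by a unary predicate P: the least
family with the closure properties containing D and P.\<close>

inductive expdef :: "(nat \<Rightarrow> 'a list set set) \<Rightarrow> 'a set \<Rightarrow> nat \<Rightarrow> 'a list set \<Rightarrow> bool"
  for D :: "nat \<Rightarrow> 'a list set set" and P :: "'a set" where
  base: "S \<in> D n \<Longrightarrow> expdef D P n S"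
| pred: "expdef D P 1 {[p] | p. p \<in> P}"
| full: "expdef D P n (tuples n)"
| diag: "i < n \<Longrightarrow> j < n \<Longrightarrow> expdef D P n {xs \<in> tuples n. xs ! i = xs ! j}"
| compl: "expdef D P n S \<Longrightarrow> expdef D P n (tuples n - S)"
| inter: "expdef D P n S \<Longrightarrow> expdef D P n T \<Longrightarrow> expdef D P n (S \<inter> T)"
| cyl: "expdef D P n S \<Longrightarrow> expdef D P (Suc n) {xs @ [y] | xs y. xs \<in> S}"
| proj: "expdef D P (Suc n) S \<Longrightarrow> expdef D P n (butlast ` S)"
| perm: "expdef D P n S \<Longrightarrow> bij_betw p {..<n} {..<n} \<Longrightarrow>
          expdef D P n {xs \<in> tuples n. map (\<lambda>i. xs ! p i) [0..<n] \<in> S}"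

definition expand :: "(nat \<Rightarrow> 'a list set set) \<Rightarrow> 'a set \<Rightarrow> nat \<Rightarrow> 'a list set set" where
  "expand D P n = {S. expdef D P n S}"

text \<open>Sets definable with parameters from A: fibres of 0-definable sets over
tuples of parameters from A.\<close>

definition defin :: "(nat \<Rightarrow> 'a list set set) \<Rightarrow> 'a set \<Rightarrow> nat \<Rightarrow> 'a list set set" where
  "defin D A n = {{xs \<in> tuples n. xs @ as \<in> S} | S as.
                    set as \<subseteq> A \<and> S \<in> D (n + length as)}"

definition dcl :: "(nat \<Rightarrow> 'a list set set) \<Rightarrow> 'a set \<Rightarrow> 'a set" where
  "dcl D A = {b. {[b]} \<in> defin D A 1}"

definition dcl_indep_over :: "(nat \<Rightarrow> 'a list set set) \<Rightarrow> 'a set \<Rightarrow> 'a set \<Rightarrow> bool" where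
  "dcl_indep_over D B P \<longleftrightarrow> (\<forall>a\<in>B. a \<notin> dcl D ((B - {a}) \<union> P))"

definition interval_or_point :: "'a::linorder set \<Rightarrow> bool" where
  "interval_or_point I \<longleftrightarrow> (\<exists>a. I = {a}) \<or> (\<exists>a b. I = {a<..<b}) \<or> (\<exists>a. I = {a<..})
      \<or> (\<exists>b. I = {..<b}) \<or> I = UNIV"

definition o_minimal :: "(nat \<Rightarrow> 'a::linorder list set set) \<Rightarrow> bool" where
  "o_minimal D \<longleftrightarrow> (\<forall>S \<in> defin D UNIV 1.
      \<exists>F. finite F \<and> (\<forall>I\<in>F. interval_or_point I) \<and> {x. [x] \<in> S} = \<Union>F)"

text \<open>Order topology on M (as in HOL's class order_topology) and the closure
of a subset of M^n in the product topology, via basic open boxes.\<close>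

definition ord_open :: "'a::linorder set \<Rightarrow> bool" where
  "ord_open U \<longleftrightarrow> generate_topology (range lessThan \<union> range greaterThan) U"

definition prod_closure :: "nat \<Rightarrow> 'a::linorder list set \<Rightarrow> 'a list set" where
  "prod_closure n V = {xs \<in> tuples n. \<forall>Us. length Us = n \<and>
      (\<forall>i<n. ord_open (Us ! i) \<and> xs ! i \<in> Us ! i) \<longrightarrow>
      (\<exists>ys\<in>V. \<forall>i<n. ys ! i \<in> Us ! i)}"

definition OP :: "(nat \<Rightarrow> 'a::linorder list set set) \<Rightarrow> 'a set \<Rightarrow> bool" where
  "OP D P \<longleftrightarrow> (\<forall>A n V. dcl_indep_over D (A - P) P \<longrightarrow>
      V \<in> defin (expand D P) A n \<longrightarrow> prod_closure n V \<in> defin D A n)"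

end

theory Submission
  imports Defs
begin

lemma pc_point:
  fixes b :: "'a::linorder"
  shows "prod_closure 1 {[b]} = {[b]}"
proof
  show "{[b]} \<subseteq> prod_closure 1 {[b]}"
    by (auto simp: prod_closure_def tuples_def)
next
  show "prod_closure 1 {[b]} \<subseteq> {[b]}"
  proof
    fix xs assume xs: "xs \<in> prod_closure 1 {[b]}"
    then obtain x where x: "xs = [x]"
      by (cases xs) (auto simp: prod_closure_def tuples_def)
    show "xs \<in> {[b]}"
    proof (rule ccontr)
      assume "xs \<notin> {[b]}"
      then have ne: "x \<noteq> b" using x by auto
      define U where "U = (if x < b then lessThan b else greaterThan b)"
      have o: "ord_open U" unfolding U_def ord_open_def
        by (auto intro: generate_topology.Basis)
      have xU: "x \<in> U" using ne unfolding U_def by auto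
      have bU: "b \<notin> U" unfolding U_def by auto
      from xs have "\<exists>ys\<in>{[b]}. \<forall>i<1. ys ! i \<in> [U] ! i"
        unfolding prod_closure_def using o xU x
        by (auto dest!: spec[of _ "[U]"])
      then show False using bU by auto
    qed
  qed
qed

theorem fact3p1:
  fixes D :: "nat \<Rightarrow> 'a::linordered_ab_group_add list set set"
    and e :: 'a and P :: "'a set"
  assumes "def_system D"
    and "{xs \<in> tuples 2. xs ! 0 < xs ! 1} \<in> D 2"
    and "{xs \<in> tuples 3. xs ! 2 = xs ! 0 + xs ! 1} \<in> D 3"
    and "{[0]} \<in> D 1"
    and "0 < e" and "{[e]} \<in> D 1"
    and "o_minimal D"
    and "OP D P"
  shows "\<forall>A. A \<subseteq> P \<longrightarrow> dcl (expand D P) A = dcl D A"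
proof (intro allI impI)
  fix A assume AP: "A \<subseteq> P"
  have ind: "dcl_indep_over D (A - P) P"
    using AP by (auto simp: dcl_indep_over_def)
  show "dcl (expand D P) A = dcl D A"
  proof
    show "dcl (expand D P) A \<subseteq> dcl D A"
    proof
      fix b assume "b \<in> dcl (expand D P) A"
      then have "{[b]} \<in> defin (expand D P) A 1" by (simp add: dcl_def)
      then have "prod_closure 1 {[b]} \<in> defin D A 1"
        using assms(8) ind unfolding OP_def by blast
      then show "b \<in> dcl D A" using pc_point[of b] by (simp add: dcl_def)
    qed
  next
    show "dcl D A \<subseteq> dcl (expand D P) A"
      unfolding dcl_def defin_def expand_def
      by (auto intro: expdef.base)
  qed
qed

end
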